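(* For all $y,k\in\mathbb N_0$: \begin{enumerate} \item $y+2k+\{3,4,6,7\}+4\cdot[0,k]\in\mathcal L(C_2^5)$; \item $y+2k+\{4,5,6,8,9\}+4\cdot[0,k]\in\mathcal L(C_2^5)$. \end{enumerate}
   Context: $C_2^r$ denotes an elementary abelian $2$-group of rank $r$; $[a,b]=\{x\in\mathbb Z:a\le x\le b\}$. For $L,L'\subset\mathbb Z$ and $y,k\in\mathbb Z$: $L+L'=\{a+b:a\in L,b\in L'\}$, $y+L=\{y\}+L$, and $k\cdot L=\{ka:a\in L\}$ (so $4\cdot[0,k]=\{0,4,\dots,4k\}$). For a subset $G_0$ of a finite abelian group $G$, a sequence over $G_0$ is an element of the free abelian monoid $\mathcal F(G_0)$ with basis $G_0$ (a finite unordered list of elements of $G_0$, repetitions allowed). $\mathcal B(G_0)$ is the monoid of zero-sum sequences over $G_0$ (including the empty sequence). An atom is a minimal zero-sum sequence, i.e. a nonempty zero-sum sequence that is not a product of two nonempty zero-sum sequences. For $B\in\mathcal B(G_0)$, $\mathsf L(B)=\{k\in\mathbb N_0: B \text{ is a product of } k \text{ atoms}\}$, and $\mathcal L(G_0)=\{\mathsf L(B):B\in\mathcal B(G_0)\}$; $\mathcal L(G)$ is the case $G_0=G$. *)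

theory Defs
  imports "HOL-Library.Z2" "HOL-Library.Multiset" "HOL-Analysis.Finite_Cartesian_Product"
begin

text \<open>Sequences over G0 are finite multisets with support in G0.
  The elementary abelian 2-group of rank 5 is the vector type bit^5 (bit = Z/2Z).\<close>

definition zero_sum :: "'a::comm_monoid_add multiset \<Rightarrow> bool" where
  "zero_sum S \<longleftrightarrow> sum_mset S = 0"

definition seqs_over :: "'a set \<Rightarrow> 'a multiset set" where
  "seqs_over G0 = {S. set_mset S \<subseteq> G0}"

definition zss :: "'a::comm_monoid_add set \<Rightarrow> 'a multiset set" where
  "zss G0 = {S. S \<in> seqs_over G0 \<and> zero_sum S}"

definition atom :: "'a::comm_monoid_add multiset \<Rightarrow> bool" where
  "atom S \<longleftrightarrow> S \<noteq> {#} \<and> zero_sum S \<and>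
     \<not> (\<exists>U V. U \<noteq> {#} \<and> V \<noteq> {#} \<and> zero_sum U \<and> zero_sum V \<and> S = U + V)"

definition lengths :: "'a::comm_monoid_add multiset \<Rightarrow> nat set" where
  "lengths B = {k. \<exists>As. length As = k \<and> (\<forall>A\<in>set As. atom A) \<and> B = sum_list As}"

definition system_of_sets :: "'a::comm_monoid_add set \<Rightarrow> nat set set" where
  "system_of_sets G0 = {lengths B | B. B \<in> zss G0}"

end

theory Submission
  imports Defs
begin


lemma exhaust_5:
  fixes x :: 5
  shows "x = 0 \<or> x = 1 \<or> x = 2 \<or> x = 3 \<or> x = 4"
proof (induct x)
  case (of_int z)
  then have "z = 0 \<or> z = 1 \<or> z = 2 \<or> z = 3 \<or> z = 4" by fastforce
  then show ?case by auto
qed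

lemma bit_double: "(a::bit) + a = 0"
  by (cases a) simp_all

lemma vec_double: "(x::bit^5) + x = 0"
  by (simp add: vec_eq_iff bit_double)

lemma two_vec[simp]: "(2::bit^5) = 0"
  by (simp add: vec_eq_iff)

lemma sum_list_nth: "(sum_list xs) $ i = sum_list (map (\<lambda>x. x $ i) xs)"
  by (induction xs) auto

lemma sum_filter_list: "sum_mset (filter_mset P (mset L)) = sum_list (map (\<lambda>x. if P x then x else 0) L)"
  by (induction L) auto

lemma setlike_filter:
  assumes "distinct L" "set_mset V \<subseteq> set L" "\<forall>x. count V x \<le> 1"
  shows "V = filter_mset (\<lambda>x. x \<in># V) (mset L)"
proof (rule multiset_eqI)
  fix x
  have "count (mset L) x = (if x \<in> set L then 1 else 0)"
    using assms(1) distinct_count_atmost_1 by metis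
  then show "count V x = count (filter_mset (\<lambda>x. x \<in># V) (mset L)) x"
  proof (cases "x \<in># V")
    case True
    then have "x \<in> set L" using assms(2) by auto
    moreover have "count V x = 1"
    proof -
      have "0 < count V x" using True by simp
      moreover have "count V x \<le> 1" using assms(3) by blast
      ultimately show ?thesis by linarith
    qed
    ultimately show ?thesis using True \<open>count (mset L) x = _\<close> by simp
  next
    case False
    then show ?thesis using False by (simp add: count_eq_zero_iff)
  qed
qed

lemma atom_zero: "atom {#0::'a::comm_monoid_add#}"
  unfolding atom_def zero_sum_def
  by (auto simp: single_is_union)

lemma atom_sq: assumes "x \<noteq> 0" shows "atom {#x, x::bit^5#}"
  unfolding atom_def zero_sum_def
proof (auto simp: vec_double)
  fix U V assume "U \<noteq> {#}" "V \<noteq> {#}" "sum_mset U = 0" "{#x, x#} = U + V"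
  then have eq: "U + V = {#x,x#}" by simp
  have "size (U + V) = 2" unfolding eq by simp
  then have s: "size U + size V = 2" by simp
  have "size U \<noteq> 0" "size V \<noteq> 0" using \<open>U \<noteq> {#}\<close> \<open>V \<noteq> {#}\<close> by auto
  then have "size U = 1" using s by linarith
  then obtain u where u: "U = {#u#}" by (metis size_1_singleton_mset)
  have "u \<in># U + V" using u by simp
  then have "u = x" unfolding eq by simp
  then have "U = {#x#}" using u by simp
  then show False using \<open>sum_mset U = 0\<close> assms by simp
qed

lemma atom_has0: assumes "atom A" "(0::'a::comm_monoid_add) \<in># A" shows "A = {#0#}"
proof (rule ccontr)
  assume ne: "A \<noteq> {#0#}"
  have dec: "A = {#0#} + (A - {#0#})" using assms(2) by simp
  have "A - {#0#} \<noteq> {#}" using ne dec by (metis add_0_right)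
  moreover have "zero_sum (A - {#0#})" using assms(1) dec unfolding atom_def zero_sum_def
  proof -
    have "sum_mset ({#0#} + (A - {#0#})) = sum_mset (A - {#0#})" by simp
    then have "sum_mset A = sum_mset (A - {#0#})" using dec by metis
    then show "sum_mset (A - {#0#}) = 0" using assms(1) unfolding atom_def zero_sum_def by simp
  qed
  moreover have "zero_sum {#0::'a#}" by (simp add: zero_sum_def)
  moreover have nd: "\<not> (\<exists>U V. U \<noteq> {#} \<and> V \<noteq> {#} \<and> zero_sum U \<and> zero_sum V \<and> A = U + V)"
    using assms(1) unfolding atom_def by (elim conjE)
  ultimately have "{#0::'a#} \<noteq> {#} \<and> A - {#0#} \<noteq> {#} \<and> zero_sum {#0::'a#} \<and> zero_sum (A - {#0#}) \<and> A = {#0::'a#} + (A - {#0#})"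
    using dec by (intro conjI) (assumption | rule add_mset_not_empty)+
  then show False using nd by blast
qed

lemma atom_has2: assumes "atom A" "count A x \<ge> 2" shows "A = {#x, x::bit^5#}"
proof (rule ccontr)
  assume ne: "A \<noteq> {#x,x#}"
  have sub: "{#x,x#} \<subseteq># A" using assms(2)
    by (simp add: subseteq_mset_def)
  have dec: "A = {#x,x#} + (A - {#x,x#})" using sub by (metis subset_mset.add_diff_inverse)
  have "A - {#x,x#} \<noteq> {#}" using ne dec by (metis add_0_right)
  moreover have "zero_sum (A - {#x,x#})" using assms(1) dec unfolding atom_def zero_sum_def
  proof -
    have "sum_mset ({#x,x#} + (A - {#x,x#})) = sum_mset (A - {#x,x#})" by (simp add: add.assoc[symmetric])
    then have "sum_mset A = sum_mset (A - {#x,x#})" using dec by metis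
    then show "sum_mset (A - {#x,x#}) = 0" using assms(1) unfolding atom_def zero_sum_def by simp
  qed
  moreover have "zero_sum {#x,x#}" by (simp add: zero_sum_def vec_double)
  moreover have nd: "\<not> (\<exists>U V. U \<noteq> {#} \<and> V \<noteq> {#} \<and> zero_sum U \<and> zero_sum V \<and> A = U + V)"
    using assms(1) unfolding atom_def by (elim conjE)
  ultimately have "{#x,x#} \<noteq> {#} \<and> A - {#x,x#} \<noteq> {#} \<and> zero_sum {#x,x#} \<and> zero_sum (A - {#x,x#}) \<and> A = {#x,x#} + (A - {#x,x#})"
    using dec by (intro conjI) (assumption | rule add_mset_not_empty)+
  then show False using nd by blast
qed

lemma atom_setlike:
  assumes "A \<noteq> {#}" "zero_sum A"
    and "\<And>V. V \<subseteq># A \<Longrightarrow> V \<noteq> {#} \<Longrightarrow> zero_sum V \<Longrightarrow> V = A"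
  shows "atom A"
proof -
  have "\<not> (\<exists>U V. U \<noteq> {#} \<and> V \<noteq> {#} \<and> zero_sum U \<and> zero_sum V \<and> A = U + V)"
  proof
    assume "\<exists>U V. U \<noteq> {#} \<and> V \<noteq> {#} \<and> zero_sum U \<and> zero_sum V \<and> A = U + V"
    then obtain U V where "U \<noteq> {#}" "V \<noteq> {#}" "zero_sum U" "A = U + V" by blast
    moreover have "U \<subseteq># A" using \<open>A = U + V\<close> by simp
    ultimately have "U = A" using assms(3) by blast
    then show False using \<open>A = U + V\<close> \<open>V \<noteq> {#}\<close> by simp
  qed
  then show ?thesis unfolding atom_def using assms(1,2) by blast
qed

definition comb :: "'a multiset list \<Rightarrow> (nat \<Rightarrow> nat) \<Rightarrow> 'a multiset" where
  "comb Ts c = (\<Sum>i<length Ts. repeat_mset (c i) (Ts!i))"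

definition csum :: "'a multiset list \<Rightarrow> (nat \<Rightarrow> nat) \<Rightarrow> nat" where
  "csum Ts c = (\<Sum>i<length Ts. c i)"

lemma comb_Nil[simp]: "comb [] c = {#}" by (simp add: comb_def)
lemma comb_Cons[simp]: "comb (T#Ts) c = repeat_mset (c 0) T + comb Ts (\<lambda>i. c (Suc i))"
  unfolding comb_def length_Cons sum.lessThan_Suc_shift by simp
lemma csum_Nil[simp]: "csum [] c = 0" by (simp add: csum_def)
lemma csum_Cons[simp]: "csum (T#Ts) c = c 0 + csum Ts (\<lambda>i. c (Suc i))"
  unfolding csum_def length_Cons sum.lessThan_Suc_shift by simp

lemma sum_upd:
  fixes g :: "nat \<Rightarrow> nat \<Rightarrow> 'b::comm_monoid_add"
  assumes "j < n"
  shows "(\<Sum>i<n. g ((c(j := v)) i) i) + g (c j) j = (\<Sum>i<n. g (c i) i) + g v j"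
proof -
  have fin: "finite {..<n}" by simp
  have jin: "j \<in> {..<n}" using assms by simp
  have 0: "(\<Sum>i<n. g ((c(j := v)) i) i) = g ((c(j := v)) j) j + (\<Sum>i\<in>{..<n}-{j}. g ((c(j := v)) i) i)"
    by (rule sum.remove[OF fin jin])
  have 3: "(\<Sum>i\<in>{..<n}-{j}. g ((c(j := v)) i) i) = (\<Sum>i\<in>{..<n}-{j}. g (c i) i)"
    by (rule sum.cong) auto
  have 1: "(\<Sum>i<n. g ((c(j := v)) i) i) = g v j + (\<Sum>i\<in>{..<n}-{j}. g (c i) i)"
    using 0 3 by simp
  have 2: "(\<Sum>i<n. g (c i) i) = g (c j) j + (\<Sum>i\<in>{..<n}-{j}. g (c i) i)"
    by (rule sum.remove[OF fin jin])
  show ?thesis using 1 2 by (simp add: algebra_simps)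
qed

lemma in_sum_list_sub: "A \<in> set As \<Longrightarrow> A \<subseteq># sum_list As"
proof (induction As)
  case (Cons a As)
  then show ?case by (metis mset_subset_eq_add_right mset_subset_eq_add_left subset_mset.order_trans set_ConsD sum_list.Cons)
qed simp

lemma sum_list_concat_gen: "sum_list (concat xss) = sum_list (map sum_list (xss::'a::monoid_add list list))"
  by (induction xss) auto

lemma fact_comb:
  assumes "\<forall>A\<in>set As. A \<in> set Ts"
  shows "\<exists>c. sum_list As = comb Ts c \<and> length As = csum Ts c"
  using assms
proof (induction As)
  case Nil
  show ?case by (rule exI[of _ "\<lambda>_. 0"]) (simp add: comb_def csum_def)
next
  case (Cons A As)
  then obtain c where c: "sum_list As = comb Ts c" "length As = csum Ts c" by auto
  from Cons.prems obtain j where j: "j < length Ts" "A = Ts!j" by (auto simp: in_set_conv_nth)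
  define c' where "c' = c(j := Suc (c j))"
  have "comb Ts c' + repeat_mset (c j) (Ts!j) = comb Ts c + repeat_mset (Suc (c j)) (Ts!j)"
    unfolding comb_def c'_def using sum_upd[OF j(1), of "\<lambda>m i. repeat_mset m (Ts!i)"] by simp
  then have "comb Ts c' = A + comb Ts c" using j by (simp add: algebra_simps)
  moreover have "csum Ts c' + c j = csum Ts c + Suc (c j)"
    unfolding csum_def c'_def using sum_upd[OF j(1), of "\<lambda>m i. m"] by simp
  ultimately show ?case using c by (intro exI[of _ c']) simp
qed

lemma sum_list_replicate_mset: "sum_list (replicate n (A::'a multiset)) = repeat_mset n A"
  by (induction n) auto

lemma lengths_char:
  assumes "\<forall>T\<in>set Ts. atom T" "\<And>A. atom A \<Longrightarrow> A \<subseteq># B \<Longrightarrow> A \<in> set Ts"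
  shows "lengths B = {csum Ts c | c. B = comb Ts c}"
proof
  show "lengths B \<subseteq> {csum Ts c | c. B = comb Ts c}"
  proof
    fix n assume "n \<in> lengths B"
    then obtain As where As: "length As = n" "\<forall>A\<in>set As. atom A" "B = sum_list As"
      unfolding lengths_def by auto
    have "\<forall>A\<in>set As. A \<in> set Ts"
    proof
      fix A assume A: "A \<in> set As"
      then have "atom A" using As(2) by blast
      moreover have "A \<subseteq># B" using As(3) in_sum_list_sub[OF A] by simp
      ultimately show "A \<in> set Ts" using assms(2) by blast
    qed
    then obtain c where c: "sum_list As = comb Ts c" "length As = csum Ts c" using fact_comb by blast
    then have "n = csum Ts c \<and> B = comb Ts c" using As by simp
    then show "n \<in> {csum Ts c | c. B = comb Ts c}" unfolding mem_Collect_eq by (rule exI[of _ c])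
  qed
next
  show "{csum Ts c | c. B = comb Ts c} \<subseteq> lengths B"
  proof
    fix n assume "n \<in> {csum Ts c | c. B = comb Ts c}"
    then obtain c where c: "n = csum Ts c" "B = comb Ts c" by auto
    define As where "As = concat (map (\<lambda>i. replicate (c i) (Ts!i)) [0..<length Ts])"
    have "length As = sum_list (map c [0..<length Ts])"
      unfolding As_def by (simp add: length_concat comp_def)
    also have "\<dots> = csum Ts c" unfolding csum_def
      by (simp add: sum_set_upt_conv_sum_list_nat[symmetric] atLeast0LessThan)
    finally have l: "length As = n" using c by simp
    have "sum_list As = sum_list (map (\<lambda>i. repeat_mset (c i) (Ts!i)) [0..<length Ts])"
      unfolding As_def by (simp add: sum_list_concat_gen comp_def sum_list_replicate_mset)
    also have "\<dots> = comb Ts c" unfolding comb_def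
      by (simp add: sum_set_upt_conv_sum_list_nat[symmetric] atLeast0LessThan)
    finally have s: "B = sum_list As" using c by simp
    have "\<forall>A\<in>set As. atom A"
    proof
      fix A assume "A \<in> set As"
      then obtain i where i: "i < length Ts" "A \<in> set (replicate (c i) (Ts!i))"
        unfolding As_def by auto
      then have "A = Ts!i" by (meson in_set_replicate)
      then show "atom A" using i(1) assms(1) nth_mem by metis
    qed
    then have "length As = n \<and> (\<forall>A\<in>set As. atom A) \<and> B = sum_list As" using l s by simp
    then show "n \<in> lengths B" unfolding lengths_def mem_Collect_eq by (rule exI[of _ As])
  qed
qed




definition E0 :: "bit^5" where "E0 = (\<chi> i. 1)"
definition E1 :: "bit^5" where "E1 = axis 0 1"
definition E2 :: "bit^5" where "E2 = axis 1 1"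
definition E3 :: "bit^5" where "E3 = axis 2 1"
definition E4 :: "bit^5" where "E4 = axis 3 1"
definition E5 :: "bit^5" where "E5 = axis 4 1"
definition F :: "bit^5" where "F = E1 + E2"
definition G1 :: "bit^5" where "G1 = E1 + E3"
definition G2 :: "bit^5" where "G2 = E2 + E3"

lemma coords:
  "E0$i = 1" "E1$i = (if i = 0 then 1 else 0)" "E2$i = (if i = 1 then 1 else 0)"
  "E3$i = (if i = 2 then 1 else 0)" "E4$i = (if i = 3 then 1 else 0)" "E5$i = (if i = 4 then 1 else 0)"
  by (auto simp: E0_def E1_def E2_def E3_def E4_def E5_def axis_def)

lemma coordsFG: "F$i = E1$i + E2$i" "G1$i = E1$i + E3$i" "G2$i = E2$i + E3$i"
  by (simp_all add: F_def G1_def G2_def)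

lemma distinct_els: "distinct [0, E0,E1,E2,E3,E4,E5,F,G1,G2]"
  apply (simp add: vec_eq_iff coords coordsFG)
  apply (intro conjI)
  apply ((rule exI[of _ 0]; simp; fail) | (rule exI[of _ 1]; simp; fail) | (rule exI[of _ 2]; simp; fail) | (rule exI[of _ 3]; simp; fail)| (rule exI[of _ 4]; simp; fail))+
  done

lemma neqs[simp]: "0 \<noteq> E0" "0 \<noteq> E1" "0 \<noteq> E2" "0 \<noteq> E3" "0 \<noteq> E4" "0 \<noteq> E5" "0 \<noteq> F" "0 \<noteq> G1" "0 \<noteq> G2" "E0 \<noteq> 0" "E0 \<noteq> E1" "E0 \<noteq> E2" "E0 \<noteq> E3" "E0 \<noteq> E4" "E0 \<noteq> E5" "E0 \<noteq> F" "E0 \<noteq> G1" "E0 \<noteq> G2" "E1 \<noteq> 0" "E1 \<noteq> E0" "E1 \<noteq> E2" "E1 \<noteq> E3" "E1 \<noteq> E4" "E1 \<noteq> E5" "E1 \<noteq> F" "E1 \<noteq> G1" "E1 \<noteq> G2" "E2 \<noteq> 0" "E2 \<noteq> E0" "E2 \<noteq> E1" "E2 \<noteq> E3" "E2 \<noteq> E4" "E2 \<noteq> E5" "E2 \<noteq> F" "E2 \<noteq> G1" "E2 \<noteq> G2" "E3 \<noteq> 0" "E3 \<noteq> E0" "E3 \<noteq> E1" "E3 \<noteq> E2" "E3 \<noteq> E4" "E3 \<noteq> E5" "E3 \<noteq> F" "E3 \<noteq> G1" "E3 \<noteq> G2" "E4 \<noteq> 0" "E4 \<noteq> E0" "E4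 \<noteq> E1" "E4 \<noteq> E2" "E4 \<noteq> E3" "E4 \<noteq> E5" "E4 \<noteq> F" "E4 \<noteq> G1" "E4 \<noteq> G2" "E5 \<noteq> 0" "E5 \<noteq> E0" "E5 \<noteq> E1" "E5 \<noteq> E2" "E5 \<noteq> E3" "E5 \<noteq> E4" "E5 \<noteq> F" "E5 \<noteq> G1" "E5 \<noteq> G2" "F \<noteq> 0" "F \<noteq> E0" "F \<noteq> E1" "F \<noteq> E2" "F \<noteq> E3" "F \<noteq> E4" "F \<noteq> E5" "F \<noteq> G1" "F \<noteq> G2" "G1 \<noteq> 0" "G1 \<noteq> E0" "G1 \<noteq> E1" "G1 \<noteq> E2" "G1 \<noteq> E3" "G1 \<noteq> E4" "G1 \<noteq> E5" "G1 \<noteq> F" "G1 \<noteq> G2" "G2 \<noteq> 0" "G2 \<noteq> E0" "G2 \<noteq> E1" "G2 \<noteq> E2" "G2 \<noteq> E3" "G2 \<noteq> E4" "G2 \<noteq> E5" "G2 \<noteq> F" "G2 \<noteq> G1"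
  using distinct_els by auto

lemma coord_sum: "sum_list (map (\<lambda>x. if P x then x else 0) L) $ i = sum_list (map (\<lambda>x. if P x then x $ i else (0::bit)) L)"
  by (induction L) auto
lemma bif: "((if p then (1::bit) else 0) = 1) \<longleftrightarrow> p" "((if p then (1::bit) else 0) = 0) \<longleftrightarrow> \<not>p"
  by auto

lemma idx_neq[simp]: "(0::5) \<noteq> 1" "(0::5) \<noteq> 2" "(0::5) \<noteq> 3" "(0::5) \<noteq> 4" "(1::5) \<noteq> 0" "(1::5) \<noteq> 2" "(1::5) \<noteq> 3" "(1::5) \<noteq> 4" "(2::5) \<noteq> 0" "(2::5) \<noteq> 1" "(2::5) \<noteq> 3" "(2::5) \<noteq> 4" "(3::5) \<noteq> 0" "(3::5) \<noteq> 1" "(3::5) \<noteq> 2" "(3::5) \<noteq> 4" "(4::5) \<noteq> 0" "(4::5) \<noteq> 1" "(4::5) \<noteq> 2" "(4::5) \<noteq> 3"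
  by simp_all


lemma class1: assumes "sum_list (map (\<lambda>x. if P x then x else 0) [E0,E1,E2,E3,E4,E5,F]) = 0"
  shows "filter_mset P (mset [E0,E1,E2,E3,E4,E5,F]) \<in> {{#}, {#E0,E1,E2,E3,E4,E5#}, {#E1,E2,F#}, {#E0,E3,E4,E5,F#}}"
proof -
  have c: "\<And>i. sum_list (map (\<lambda>x. if P x then x $ i else (0::bit)) [E0,E1,E2,E3,E4,E5,F]) = 0"
  proof -
    fix i
    show "sum_list (map (\<lambda>x. if P x then x $ i else (0::bit)) [E0,E1,E2,E3,E4,E5,F]) = 0"
      using arg_cong[where f="\<lambda>v. v $ i", OF assms] unfolding coord_sum zero_index .
  qed
  have b1: "P E3 = P E0" using c[of 2] by (auto simp add: coords coordsFG bif cong: if_cong)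
  have b2: "P E4 = P E0" using c[of 3] by (auto simp add: coords coordsFG bif cong: if_cong)
  have b3: "P E5 = P E0" using c[of 4] by (auto simp add: coords coordsFG bif cong: if_cong)
  have b4: "P E1 = (P E0 \<noteq> P F)" using c[of 0] by (auto simp add: coords coordsFG bif cong: if_cong)
  have b5: "P E2 = (P E0 \<noteq> P F)" using c[of 1] by (auto simp add: coords coordsFG bif cong: if_cong)
  note b = b1 b2 b3 b4 b5
  show ?thesis
    by (cases "P E0"; cases "P F"; simp add: b)
qed

lemma comb11: "comb [T0,T1,T2,T3,T4,T5,T6,T7,T8,T9,T10] c =
  repeat_mset (c 0) T0 + repeat_mset (c 1) T1 + repeat_mset (c 2) T2 + repeat_mset (c 3) T3 +
  repeat_mset (c 4) T4 + repeat_mset (c 5) T5 + repeat_mset (c 6) T6 + repeat_mset (c 7) T7 +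
  repeat_mset (c 8) T8 + repeat_mset (c 9) T9 + repeat_mset (c 10) T10"
  by (simp add: eval_nat_numeral add.assoc)

lemma csum11: "csum [T0,T1,T2,T3,T4,T5,T6,T7,T8,T9,T10] c =
  c 0 + c 1 + c 2 + c 3 + c 4 + c 5 + c 6 + c 7 + c 8 + c 9 + c 10"
  by (simp add: eval_nat_numeral add.assoc)

lemma sum_mset_repeat: "sum_mset A = 0 \<Longrightarrow> sum_mset (repeat_mset n A) = (0::'a::comm_monoid_add)"
  by (induction n) auto




abbreviation "L1 \<equiv> [E0,E1,E2,E3,E4,E5,F]"
abbreviation "Ts1 \<equiv> [{#0#}, {#E0,E0#}, {#E1,E1#}, {#E2,E2#}, {#E3,E3#}, {#E4,E4#}, {#E5,E5#}, {#F,F#},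
   {#E0,E1,E2,E3,E4,E5#}, {#E1,E2,F#}, {#E0,E3,E4,E5,F#}]"

lemma setlike_class1:
  assumes "set_mset V \<subseteq> set L1" "\<forall>x. count V x \<le> 1" "zero_sum V"
  shows "V \<in> {{#}, {#E0,E1,E2,E3,E4,E5#}, {#E1,E2,F#}, {#E0,E3,E4,E5,F#}}"
proof -
  have d: "distinct L1" by simp
  have V: "V = filter_mset (\<lambda>x. x \<in># V) (mset L1)" by (rule setlike_filter[OF d assms(1,2)])
  have "sum_mset (filter_mset (\<lambda>x. x \<in># V) (mset L1)) = 0"
    using assms(3) V unfolding zero_sum_def by metis
  then have "sum_list (map (\<lambda>x. if x \<in># V then x else 0) L1) = 0"
    unfolding sum_filter_list .
  from class1[OF this] show ?thesis using V by metis
qed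

lemma atoms1:
  assumes "atom A" "set_mset A \<subseteq> insert 0 (set L1)"
  shows "A \<in> set Ts1"
proof (cases "0 \<in># A")
  case True
  then show ?thesis using atom_has0[OF assms(1)] by simp
next
  case no0: False
  show ?thesis
  proof (cases "\<exists>x. count A x \<ge> 2")
    case True
    then obtain x where x: "count A x \<ge> 2" by blast
    then have "x \<in># A" by (metis count_eq_zero_iff not_numeral_le_zero)
    then have "x \<in> set L1" using assms(2) no0 by auto
    then show ?thesis using atom_has2[OF assms(1) x] by auto
  next
    case False
    then have c: "\<forall>x. count A x \<le> 1" by (metis not_le one_add_one Suc_leI Suc_1 le_less not_less_eq_eq)
    have s: "set_mset A \<subseteq> set L1" using assms(2) no0 by auto
    have "zero_sum A" using assms(1) unfolding atom_def by blast
    moreover have "A \<noteq> {#}" using assms(1) unfolding atom_def by blast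
    ultimately show ?thesis using setlike_class1[OF s c] by auto
  qed
qed

lemma zs_vec: "(\<And>i::5. v $ i = 0) \<Longrightarrow> v = (0::bit^5)"
  by (simp add: vec_eq_iff)

lemma zs1_0: "sum_mset {#E0,E1,E2,E3,E4,E5#} = 0"
  apply (rule zs_vec)
  subgoal for i using exhaust_5[of i] by (auto simp: coords coordsFG)
  done

lemma zs1_1: "sum_mset {#E1,E2,F#} = 0"
  apply (rule zs_vec)
  subgoal for i using exhaust_5[of i] by (auto simp: coords coordsFG)
  done

lemma zs1_2: "sum_mset {#E0,E3,E4,E5,F#} = 0"
  apply (rule zs_vec)
  subgoal for i using exhaust_5[of i] by (auto simp: coords coordsFG)
  done

lemmas zs1 = zs1_0 zs1_1 zs1_2

lemma setlike_atom1:
  assumes "T \<in> {{#E0,E1,E2,E3,E4,E5#}, {#E1,E2,F#}, {#E0,E3,E4,E5,F#}}"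
  shows "atom T"
proof (rule atom_setlike)
  show "T \<noteq> {#}" using assms by auto
  show "zero_sum T" using assms zs1 unfolding zero_sum_def by auto
next
  fix V assume V: "V \<subseteq># T" "V \<noteq> {#}" "zero_sum V"
  have "set_mset T \<subseteq> set L1" using assms by auto
  then have s: "set_mset V \<subseteq> set L1" using V(1) by (meson mset_subset_eqD subset_iff)
  have "distinct L1" by simp
  have cT: "\<forall>x. count T x \<le> 1" using assms by (auto simp: count_add_mset)
  have "\<forall>x. count V x \<le> 1" using cT V(1) by (meson mset_subset_eq_count order_trans)
  from setlike_class1[OF s this V(3)] have "V \<in> {{#E0,E1,E2,E3,E4,E5#}, {#E1,E2,F#}, {#E0,E3,E4,E5,F#}}"
    using V(2) by auto
  moreover have "set_mset V \<subseteq> set_mset T" using V(1) by (meson mset_subset_eqD subset_iff)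
  ultimately show "V = T" using assms by auto
qed

lemma Ts1_atoms: "\<forall>T\<in>set Ts1. atom T"
  using setlike_atom1 atom_zero atom_sq by simp

definition B1 :: "nat \<Rightarrow> nat \<Rightarrow> (bit^5) multiset" where
  "B1 y k = replicate_mset y 0 + repeat_mset (2*k+2) {#E0,E1,E2,E3,E4,E5#} + {#F,F#}"

lemma B1_set: "set_mset (B1 y k) \<subseteq> insert 0 (set L1)"
  unfolding B1_def by (auto split: if_splits)

lemma B1_len: "lengths (B1 y k) = {csum Ts1 c | c. B1 y k = comb Ts1 c}"
proof (rule lengths_char[OF Ts1_atoms])
  fix A assume "atom A" "A \<subseteq># B1 y k"
  moreover have "set_mset A \<subseteq> insert 0 (set L1)"
    using B1_set \<open>A \<subseteq># B1 y k\<close> by (meson mset_subset_eqD subset_iff)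
  ultimately show "A \<in> set Ts1" using atoms1 by blast
qed

definition eqs1 :: "nat \<Rightarrow> nat \<Rightarrow> (nat \<Rightarrow> nat) \<Rightarrow> bool" where
  "eqs1 y k c \<longleftrightarrow> (c 0 = y \<and> 2*c 1 + c 8 + c 10 = 2*k+2 \<and> 2*c 2 + c 8 + c 9 = 2*k+2 \<and>
   2*c 3 + c 8 + c 9 = 2*k+2 \<and> 2*c 4 + c 8 + c 10 = 2*k+2 \<and> 2*c 5 + c 8 + c 10 = 2*k+2 \<and>
   2*c 6 + c 8 + c 10 = 2*k+2 \<and> 2*c 7 + c 9 + c 10 = 2)"

lemma B1_eq: "B1 y k = comb Ts1 c \<longleftrightarrow> eqs1 y k c" (is "_ \<longleftrightarrow> ?R")
proof
  assume h: "B1 y k = comb Ts1 c"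
  have e: "\<And>x. count (B1 y k) x = count (comb Ts1 c) x" using h by simp
  show ?R using e[of 0] e[of E0] e[of E1] e[of E2] e[of E3] e[of E4] e[of E5] e[of F]
    unfolding eqs1_def by (simp add: B1_def comb11 del: comb_Cons)
next
  assume h: ?R
  show "B1 y k = comb Ts1 c"
  proof (rule multiset_eqI)
    fix x
    consider "x = 0" | "x = E0" | "x = E1" | "x = E2" | "x = E3" | "x = E4" | "x = E5" | "x = F"
      | "x \<noteq> 0 \<and> x \<noteq> E0 \<and> x \<noteq> E1 \<and> x \<noteq> E2 \<and> x \<noteq> E3 \<and> x \<noteq> E4 \<and> x \<noteq> E5 \<and> x \<noteq> F \<and>
         0 \<noteq> x \<and> E0 \<noteq> x \<and> E1 \<noteq> x \<and> E2 \<noteq> x \<and> E3 \<noteq> x \<and> E4 \<noteq> x \<and> E5 \<noteq> x \<and> F \<noteq> x"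
      by blast
    then show "count (B1 y k) x = count (comb Ts1 c) x" using h unfolding eqs1_def
      by cases (simp_all add: B1_def comb11 del: comb_Cons)
  qed
qed

abbreviation "tgt1 S k \<equiv> \<exists>a i. (a = 3 \<or> a = 4 \<or> a = 6 \<or> a = (7::nat)) \<and> i \<le> k \<and> S = 2*k + a + 4*i"
lemma a00: "2*p + (u::nat) = 2*k+2 \<Longrightarrow> tgt1 (6*p + 1 + u) k"
proof -
  assume h: "2*p + (u::nat) = 2*k+2"
  show ?thesis
  proof (cases "p = k+1")
    case True show ?thesis by (rule exI[of _ 7], rule exI[of _ k]) (use True h in arith)
  next
    case False show ?thesis by (rule exI[of _ 3], rule exI[of _ p]) (use False h in arith)
  qed
qed
lemma a11: "2*p + (u::nat) + 1 = 2*k+2 \<Longrightarrow> tgt1 (6*p + u + 2) k"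
  by (rule exI[of _ 3], rule exI[of _ p]) arith
lemma a20: "2*p + (u::nat) = 2*k+2 \<Longrightarrow> 2*q + u + 2 = 2*k+2 \<Longrightarrow> tgt1 (4*p + 2*q + u + 2) k"
  by (rule exI[of _ 6], rule exI[of _ "p - 1"]) arith
lemma a02: "2*p + (u::nat) + 2 = 2*k+2 \<Longrightarrow> 2*q + u = 2*k+2 \<Longrightarrow> tgt1 (4*p + 2*q + u + 2) k"
  by (rule exI[of _ 4], rule exI[of _ p]) arith

lemma arith1:
  fixes c :: "nat \<Rightarrow> nat"
  assumes h0: "eqs1 y k c"
  shows "\<exists>a i. (a = 3 \<or> a = 4 \<or> a = 6 \<or> a = (7::nat)) \<and> i \<le> k \<and>
     c 0 + c 1 + c 2 + c 3 + c 4 + c 5 + c 6 + c 7 + c 8 + c 9 + c 10 = y + 2*k + a + 4*i"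
proof -
  have h: "c 0 = y \<and> 2*c 1 + c 8 + c 10 = 2*k+2 \<and> 2*c 2 + c 8 + c 9 = 2*k+2 \<and>
   2*c 3 + c 8 + c 9 = 2*k+2 \<and> 2*c 4 + c 8 + c 10 = 2*k+2 \<and> 2*c 5 + c 8 + c 10 = 2*k+2 \<and>
   2*c 6 + c 8 + c 10 = 2*k+2 \<and> 2*c 7 + c 9 + c 10 = 2" using h0 unfolding eqs1_def .
  have "2*c 7 + c 9 + c 10 = 2" using h by blast
  then have "(c 9 = 0 \<and> c 10 = 0 \<and> c 7 = 1) \<or> (c 9 = 1 \<and> c 10 = 1 \<and> c 7 = 0) \<or>
    (c 9 = 2 \<and> c 10 = 0 \<and> c 7 = 0) \<or> (c 9 = 0 \<and> c 10 = 2 \<and> c 7 = 0)" by arith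
  then consider (c00) "c 9 = 0" "c 10 = 0" "c 7 = 1" | (c11) "c 9 = 1" "c 10 = 1" "c 7 = 0"
    | (c20) "c 9 = 2" "c 10 = 0" "c 7 = 0" | (c02) "c 9 = 0" "c 10 = 2" "c 7 = 0" by (elim disjE conjE) auto
  then show ?thesis
  proof cases
    case c00
    have "tgt1 (6*c 1 + 1 + c 8) k" by (rule a00) (use h c00 in arith)
    then obtain a i where ai: "(a = 3 \<or> a = 4 \<or> a = 6 \<or> a = (7::nat))" "i \<le> k" "6*c 1 + 1 + c 8 = 2*k + a + 4*i" by blast
    show ?thesis by (rule exI[of _ a], rule exI[of _ i]) (use ai h c00 in arith)
  next
    case c11
    have "tgt1 (6*c 1 + c 8 + 2) k" by (rule a11) (use h c11 in arith)
    then obtain a i where ai: "(a = 3 \<or> a = 4 \<or> a = 6 \<or> a = (7::nat))" "i \<le> k" "6*c 1 + c 8 + 2 = 2*k + a + 4*i" by blast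
    show ?thesis by (rule exI[of _ a], rule exI[of _ i]) (use ai h c11 in arith)
  next
    case c20
    have "tgt1 (4*c 1 + 2*c 2 + c 8 + 2) k" by (rule a20) (use h c20 in arith)+
    then obtain a i where ai: "(a = 3 \<or> a = 4 \<or> a = 6 \<or> a = (7::nat))" "i \<le> k" "4*c 1 + 2*c 2 + c 8 + 2 = 2*k + a + 4*i" by blast
    show ?thesis by (rule exI[of _ a], rule exI[of _ i]) (use ai h c20 in arith)
  next
    case c02
    have "tgt1 (4*c 1 + 2*c 2 + c 8 + 2) k" by (rule a02) (use h c02 in arith)+
    then obtain a i where ai: "(a = 3 \<or> a = 4 \<or> a = 6 \<or> a = (7::nat))" "i \<le> k" "4*c 1 + 2*c 2 + c 8 + 2 = 2*k + a + 4*i" by blast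
    show ?thesis by (rule exI[of _ a], rule exI[of _ i]) (use ai h c02 in arith)
  qed
qed

lemma part1: "{y + 2*k + a + 4*i | a i. a \<in> {3,4,6,7} \<and> i \<le> k} = lengths (B1 y k)"
proof (rule set_eqI, rule iffI)
  fix n assume "n \<in> {y + 2*k + a + 4*i | a i. a \<in> {3,4,6,7} \<and> i \<le> k}"
  then obtain a i where ai: "a \<in> {3,4,6,7}" "i \<le> k" "n = y + 2*k + a + 4*i" by blast
  have "\<exists>c. n = csum Ts1 c \<and> B1 y k = comb Ts1 c"
  proof -
    have "\<exists>v::nat list. length v = 11 \<and> n = sum_list v \<and> eqs1 y k (\<lambda>j. v!j)"
    proof -
      from ai(1) consider "a = 3" | "a = 4" | "a = 6" | "a = 7" by blast
      then show ?thesis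
      proof cases
        case 1 show ?thesis
          by (rule exI[of _ "[y,i,i,i,i,i,i,1,2*k+2-2*i,0,0]"]) (use ai 1 in \<open>simp add: eqs1_def\<close>)
      next
        case 2 show ?thesis
          by (rule exI[of _ "[y,i,i+1,i+1,i,i,i,0,2*k-2*i,0,2]"]) (use ai 2 in \<open>simp add: eqs1_def\<close>)
      next
        case 3 show ?thesis
          by (rule exI[of _ "[y,i+1,i,i,i+1,i+1,i+1,0,2*k-2*i,2,0]"]) (use ai 3 in \<open>simp add: eqs1_def\<close>)
      next
        case 4 show ?thesis
          by (rule exI[of _ "[y,i+1,i+1,i+1,i+1,i+1,i+1,1,2*k-2*i,0,0]"]) (use ai 4 in \<open>simp add: eqs1_def\<close>)
      qed
    qed
    then obtain v where v: "length v = 11" "n = sum_list v" "eqs1 y k (\<lambda>j. v!j)" by blast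
    have "B1 y k = comb Ts1 (\<lambda>j. v!j)" unfolding B1_eq using v(3) .
    moreover have "n = csum Ts1 (\<lambda>j. v!j)"
    proof -
      obtain v0 v1 v2 v3 v4 v5 v6 v7 v8 v9 v10 where "v = [v0,v1,v2,v3,v4,v5,v6,v7,v8,v9,v10]"
        using v(1) by (simp add: length_Suc_conv eval_nat_numeral) blast
      then show ?thesis using v(2) by (simp add: csum11 del: csum_Cons)
    qed
    ultimately show ?thesis by blast
  qed
  then show "n \<in> lengths (B1 y k)" unfolding B1_len by blast
next
  fix n assume "n \<in> lengths (B1 y k)"
  then obtain c where c: "n = csum Ts1 c" "B1 y k = comb Ts1 c" unfolding B1_len by blast
  from arith1[OF c(2)[unfolded B1_eq]] obtain a i where
    "(a = 3 \<or> a = 4 \<or> a = 6 \<or> a = (7::nat))" "i \<le> k"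
    "c 0 + c 1 + c 2 + c 3 + c 4 + c 5 + c 6 + c 7 + c 8 + c 9 + c 10 = y + 2*k + a + 4*i" by blast
  then show "n \<in> {y + 2*k + a + 4*i | a i. a \<in> {3,4,6,7} \<and> i \<le> k}"
    using c(1) unfolding csum11 by auto
qed




abbreviation "L2 \<equiv> [E0,E1,E2,E3,E4,E5,G1,G2]"
abbreviation "Z2 \<equiv> {{#E0,E1,E2,E3,E4,E5#}, {#E1,E3,G1#}, {#E0,E2,E4,E5,G1#}, {#E2,E3,G2#},
   {#E0,E1,E4,E5,G2#}, {#E1,E2,G1,G2#}, {#E0,E3,E4,E5,G1,G2#}}"
abbreviation "Ts2 \<equiv> [{#0#}, {#E0,E0#}, {#E1,E1#}, {#E2,E2#}, {#E3,E3#}, {#E4,E4#}, {#E5,E5#}, {#G1,G1#}, {#G2,G2#},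
   {#E0,E1,E2,E3,E4,E5#}, {#E1,E3,G1#}, {#E0,E2,E4,E5,G1#}, {#E2,E3,G2#},
   {#E0,E1,E4,E5,G2#}, {#E1,E2,G1,G2#}, {#E0,E3,E4,E5,G1,G2#}]"

lemma class2:
  assumes "sum_list (map (\<lambda>x. if P x then x else 0) L2) = 0"
  shows "filter_mset P (mset L2) \<in> insert {#} Z2"
proof -
  have c: "\<And>i. sum_list (map (\<lambda>x. if P x then x $ i else (0::bit)) L2) = 0"
  proof -
    fix i
    show "sum_list (map (\<lambda>x. if P x then x $ i else (0::bit)) L2) = 0"
      using arg_cong[where f="\<lambda>v. v $ i", OF assms] unfolding coord_sum zero_index .
  qed
  have b1: "P E4 = P E0" using c[of 3] by (auto simp add: coords coordsFG bif cong: if_cong)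
  have b2: "P E5 = P E0" using c[of 4] by (auto simp add: coords coordsFG bif cong: if_cong)
  have b3: "P E1 = (P E0 \<noteq> P G1)" using c[of 0] by (auto simp add: coords coordsFG bif cong: if_cong)
  have b4: "P E2 = (P E0 \<noteq> P G2)" using c[of 1] by (auto simp add: coords coordsFG bif cong: if_cong)
  have b5: "P E3 = (P E0 \<noteq> (P G1 \<noteq> P G2))" using c[of 2] by (auto simp add: coords coordsFG bif cong: if_cong)
  note b = b1 b2 b3 b4 b5
  show ?thesis
    by (cases "P E0"; cases "P G1"; cases "P G2"; simp add: b)
qed

lemma setlike_class2:
  assumes "set_mset V \<subseteq> set L2" "\<forall>x. count V x \<le> 1" "zero_sum V"
  shows "V \<in> insert {#} Z2"
proof -
  have d: "distinct L2" by simp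
  have V: "V = filter_mset (\<lambda>x. x \<in># V) (mset L2)" by (rule setlike_filter[OF d assms(1,2)])
  have "sum_mset (filter_mset (\<lambda>x. x \<in># V) (mset L2)) = 0"
    using assms(3) V unfolding zero_sum_def by metis
  then have "sum_list (map (\<lambda>x. if x \<in># V then x else 0) L2) = 0"
    unfolding sum_filter_list .
  from class2[OF this] show ?thesis using V by metis
qed

lemma atoms2:
  assumes "atom A" "set_mset A \<subseteq> insert 0 (set L2)"
  shows "A \<in> set Ts2"
proof (cases "0 \<in># A")
  case True
  then show ?thesis using atom_has0[OF assms(1)] by simp
next
  case no0: False
  show ?thesis
  proof (cases "\<exists>x. count A x \<ge> 2")
    case True
    then obtain x where x: "count A x \<ge> 2" by blast
    then have "x \<in># A" by (metis count_eq_zero_iff not_numeral_le_zero)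
    then have "x \<in> set L2" using assms(2) no0 by auto
    then show ?thesis using atom_has2[OF assms(1) x] by auto
  next
    case False
    then have c: "\<forall>x. count A x \<le> 1" by (metis not_le one_add_one Suc_leI Suc_1 le_less not_less_eq_eq)
    have s: "set_mset A \<subseteq> set L2" using assms(2) no0 by auto
    have "zero_sum A" using assms(1) unfolding atom_def by blast
    moreover have "A \<noteq> {#}" using assms(1) unfolding atom_def by blast
    ultimately show ?thesis using setlike_class2[OF s c] by auto
  qed
qed

lemma zs_vec2: "(\<And>i::5. v $ i = 0) \<Longrightarrow> v = (0::bit^5)"
  by (simp add: vec_eq_iff)

lemma zs2_0: "sum_mset {#E0,E1,E2,E3,E4,E5#} = 0"
  apply (rule zs_vec2)
  subgoal for i using exhaust_5[of i] by (auto simp: coords coordsFG)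
  done

lemma zs2_1: "sum_mset {#E1,E3,G1#} = 0"
  apply (rule zs_vec2)
  subgoal for i using exhaust_5[of i] by (auto simp: coords coordsFG)
  done

lemma zs2_2: "sum_mset {#E0,E2,E4,E5,G1#} = 0"
  apply (rule zs_vec2)
  subgoal for i using exhaust_5[of i] by (auto simp: coords coordsFG)
  done

lemma zs2_3: "sum_mset {#E2,E3,G2#} = 0"
  apply (rule zs_vec2)
  subgoal for i using exhaust_5[of i] by (auto simp: coords coordsFG)
  done

lemma zs2_4: "sum_mset {#E0,E1,E4,E5,G2#} = 0"
  apply (rule zs_vec2)
  subgoal for i using exhaust_5[of i] by (auto simp: coords coordsFG)
  done

lemma zs2_5: "sum_mset {#E1,E2,G1,G2#} = 0"
  apply (rule zs_vec2)
  subgoal for i using exhaust_5[of i] by (auto simp: coords coordsFG)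
  done

lemma zs2_6: "sum_mset {#E0,E3,E4,E5,G1,G2#} = 0"
  apply (rule zs_vec2)
  subgoal for i using exhaust_5[of i] by (auto simp: coords coordsFG)
  done

lemmas zs2 = zs2_0 zs2_1 zs2_2 zs2_3 zs2_4 zs2_5 zs2_6


lemma setlike_atom2:
  assumes "T \<in> Z2"
  shows "atom T"
proof (rule atom_setlike)
  show "T \<noteq> {#}" using assms by auto
  show "zero_sum T" using assms zs2 unfolding zero_sum_def by auto
next
  fix V assume V: "V \<subseteq># T" "V \<noteq> {#}" "zero_sum V"
  have "set_mset T \<subseteq> set L2" using assms by auto
  then have s: "set_mset V \<subseteq> set L2" using V(1) by (meson mset_subset_eqD subset_iff)
  have cT: "\<forall>x. count T x \<le> 1" using assms by (auto simp: count_add_mset)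
  have "\<forall>x. count V x \<le> 1" using cT V(1) by (meson mset_subset_eq_count order_trans)
  from setlike_class2[OF s this V(3)] have "V \<in> Z2"
    using V(2) by auto
  moreover have "set_mset V \<subseteq> set_mset T" using V(1) by (meson mset_subset_eqD subset_iff)
  ultimately show "V = T" using assms by auto
qed

lemma Ts2_atoms: "\<forall>T\<in>set Ts2. atom T"
  using setlike_atom2 atom_zero atom_sq by simp

definition B2 :: "nat \<Rightarrow> nat \<Rightarrow> (bit^5) multiset" where
  "B2 y k = replicate_mset y 0 + repeat_mset (2*k+3) {#E0,E1,E2,E3,E4,E5#} + {#E1,E2,G1,G2#}"

lemma B2_set: "set_mset (B2 y k) \<subseteq> insert 0 (set L2)"
  unfolding B2_def by (auto split: if_splits)

lemma B2_len: "lengths (B2 y k) = {csum Ts2 c | c. B2 y k = comb Ts2 c}"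
proof (rule lengths_char[OF Ts2_atoms])
  fix A assume "atom A" "A \<subseteq># B2 y k"
  moreover have "set_mset A \<subseteq> insert 0 (set L2)"
    using B2_set \<open>A \<subseteq># B2 y k\<close> by (meson mset_subset_eqD subset_iff)
  ultimately show "A \<in> set Ts2" using atoms2 by blast
qed

lemma comb16: "comb [T0,T1,T2,T3,T4,T5,T6,T7,T8,T9,T10,T11,T12,T13,T14,T15] c =
  repeat_mset (c 0) T0 + repeat_mset (c 1) T1 + repeat_mset (c 2) T2 + repeat_mset (c 3) T3 +
  repeat_mset (c 4) T4 + repeat_mset (c 5) T5 + repeat_mset (c 6) T6 + repeat_mset (c 7) T7 +
  repeat_mset (c 8) T8 + repeat_mset (c 9) T9 + repeat_mset (c 10) T10 + repeat_mset (c 11) T11 +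
  repeat_mset (c 12) T12 + repeat_mset (c 13) T13 + repeat_mset (c 14) T14 + repeat_mset (c 15) T15"
  by (simp add: eval_nat_numeral add.assoc)

lemma csum16: "csum [T0,T1,T2,T3,T4,T5,T6,T7,T8,T9,T10,T11,T12,T13,T14,T15] c =
  c 0 + c 1 + c 2 + c 3 + c 4 + c 5 + c 6 + c 7 + c 8 + c 9 + c 10 + c 11 + c 12 + c 13 + c 14 + c 15"
  by (simp add: eval_nat_numeral add.assoc)

definition eqs2 :: "nat \<Rightarrow> nat \<Rightarrow> (nat \<Rightarrow> nat) \<Rightarrow> bool" where
  "eqs2 y k c \<longleftrightarrow> (c 0 = y \<and> 2*c 1 + c 9 + c 11 + c 13 + c 15 = 2*k+3 \<and> 2*c 2 + c 9 + c 10 + c 13 + c 14 = 2*k+4 \<and>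
   2*c 3 + c 9 + c 11 + c 12 + c 14 = 2*k+4 \<and> 2*c 4 + c 9 + c 10 + c 12 + c 15 = 2*k+3 \<and>
   2*c 5 + c 9 + c 11 + c 13 + c 15 = 2*k+3 \<and> 2*c 6 + c 9 + c 11 + c 13 + c 15 = 2*k+3 \<and>
   2*c 7 + c 10 + c 11 + c 14 + c 15 = 1 \<and> 2*c 8 + c 12 + c 13 + c 14 + c 15 = 1)"

lemma B2_eq: "B2 y k = comb Ts2 c \<longleftrightarrow> eqs2 y k c" (is "_ \<longleftrightarrow> ?R")
proof
  assume h: "B2 y k = comb Ts2 c"
  have e: "\<And>x. count (B2 y k) x = count (comb Ts2 c) x" using h by simp
  show ?R using e[of 0] e[of E0] e[of E1] e[of E2] e[of E3] e[of E4] e[of E5] e[of G1] e[of G2]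
    unfolding eqs2_def by (simp add: B2_def comb16 del: comb_Cons)
next
  assume h: ?R
  show "B2 y k = comb Ts2 c"
  proof (rule multiset_eqI)
    fix x
    consider "x = 0" | "x = E0" | "x = E1" | "x = E2" | "x = E3" | "x = E4" | "x = E5" | "x = G1" | "x = G2"
      | "x \<noteq> 0 \<and> x \<noteq> E0 \<and> x \<noteq> E1 \<and> x \<noteq> E2 \<and> x \<noteq> E3 \<and> x \<noteq> E4 \<and> x \<noteq> E5 \<and> x \<noteq> G1 \<and> x \<noteq> G2 \<and>
         0 \<noteq> x \<and> E0 \<noteq> x \<and> E1 \<noteq> x \<and> E2 \<noteq> x \<and> E3 \<noteq> x \<and> E4 \<noteq> x \<and> E5 \<noteq> x \<and> G1 \<noteq> x \<and> G2 \<noteq> x"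
      by blast
    then show "count (B2 y k) x = count (comb Ts2 c) x" using h unfolding eqs2_def
      by cases (simp_all add: B2_def comb16 del: comb_Cons)
  qed
qed

abbreviation "tgt2 S y k \<equiv> \<exists>a i. (a = 4 \<or> a = 5 \<or> a = 6 \<or> a = 8 \<or> a = (9::nat)) \<and> i \<le> k \<and> S = y + 2*k + a + 4*i"

lemma fin4: "S = y + 4*p + 2*k + 4 \<Longrightarrow> p \<le> k + 1 \<Longrightarrow> tgt2 S y k"
proof -
  assume h: "S = y + 4*p + 2*k + 4" "p \<le> k + 1"
  show ?thesis
  proof (cases "p = k+1")
    case True show ?thesis by (rule exI[of _ 8], rule exI[of _ k]) (use True h in arith)
  next
    case False show ?thesis by (rule exI[of _ 4], rule exI[of _ p]) (use False h in arith)
  qed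
qed

lemma fin5: "S = y + 4*p + 2*k + 5 \<Longrightarrow> p \<le> k + 1 \<Longrightarrow> tgt2 S y k"
proof -
  assume h: "S = y + 4*p + 2*k + 5" "p \<le> k + 1"
  show ?thesis
  proof (cases "p = k+1")
    case True show ?thesis by (rule exI[of _ 9], rule exI[of _ k]) (use True h in arith)
  next
    case False show ?thesis by (rule exI[of _ 5], rule exI[of _ p]) (use False h in arith)
  qed
qed

lemma fin6: "S = y + 4*p + 2*k + 6 \<Longrightarrow> p \<le> k \<Longrightarrow> tgt2 S y k"
  by (rule exI[of _ 6], rule exI[of _ p]) arith

abbreviation "SUM2 c \<equiv> c 0 + c 1 + c 2 + c 3 + c 4 + c 5 + c 6 + c 7 + c 8 + c 9 + c 10 + c 11 + c 12 + c 13 + c 14 + c 15"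

lemma arith2:
  fixes c :: "nat \<Rightarrow> nat"
  assumes h0: "eqs2 y k c"
  shows "tgt2 (SUM2 c) y k"
proof -
  have h0': "c 0 = y" and hE0: "2*c 1 + c 9 + c 11 + c 13 + c 15 = 2*k+3"
    and hE1: "2*c 2 + c 9 + c 10 + c 13 + c 14 = 2*k+4"
    and hE2: "2*c 3 + c 9 + c 11 + c 12 + c 14 = 2*k+4"
    and hE3: "2*c 4 + c 9 + c 10 + c 12 + c 15 = 2*k+3"
    and hE4: "2*c 5 + c 9 + c 11 + c 13 + c 15 = 2*k+3"
    and hE5: "2*c 6 + c 9 + c 11 + c 13 + c 15 = 2*k+3"
    and hG1: "2*c 7 + c 10 + c 11 + c 14 + c 15 = 1"
    and hG2: "2*c 8 + c 12 + c 13 + c 14 + c 15 = 1"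
    using h0 unfolding eqs2_def by blast+
  have c7: "c 7 = 0" using hG1 by linarith
  have c8: "c 8 = 0" using hG2 by linarith
  have c5: "c 5 = c 1" using hE0 hE4 by linarith
  have c6: "c 6 = c 1" using hE0 hE5 by linarith
  have g1: "c 10 + c 11 + c 14 + c 15 = 1" using hG1 c7 by linarith
  have g2: "c 12 + c 13 + c 14 + c 15 = 1" using hG2 c8 by linarith
  have S: "SUM2 c = y + 3 * c 1 + c 2 + c 3 + c 4 + c 9 + c 10 + c 11 + c 12 + c 13 + c 14 + c 15"
    using h0' c5 c6 c7 c8 by simp
  consider (a) "c 14 = 1" "c 10 = 0" "c 11 = 0" "c 12 = 0" "c 13 = 0" "c 15 = 0"
    | (b) "c 15 = 1" "c 10 = 0" "c 11 = 0" "c 12 = 0" "c 13 = 0" "c 14 = 0"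
    | (c) "c 10 = 1" "c 12 = 1" "c 11 = 0" "c 13 = 0" "c 14 = 0" "c 15 = 0"
    | (d) "c 10 = 1" "c 13 = 1" "c 11 = 0" "c 12 = 0" "c 14 = 0" "c 15 = 0"
    | (e) "c 11 = 1" "c 12 = 1" "c 10 = 0" "c 13 = 0" "c 14 = 0" "c 15 = 0"
    | (f) "c 11 = 1" "c 13 = 1" "c 10 = 0" "c 12 = 0" "c 14 = 0" "c 15 = 0"
  proof -
    show thesis
    proof (cases "c 14 = 0")
      case False
      then have "c 14 = 1" "c 10 = 0" "c 11 = 0" "c 12 = 0" "c 13 = 0" "c 15 = 0" using g1 g2 by linarith+
      then show thesis by (rule that(1))
    next
      case z14: True
      show thesis
      proof (cases "c 15 = 0")
        case False
        then have "c 15 = 1" "c 10 = 0" "c 11 = 0" "c 12 = 0" "c 13 = 0" "c 14 = 0" using g1 g2 z14 by linarith+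
        then show thesis by (rule that(2))
      next
        case z15: True
        show thesis
        proof (cases "c 10 = 0")
          case z10: True
          show thesis
          proof (cases "c 12 = 0")
            case True
            then have "c 11 = 1" "c 13 = 1" "c 10 = 0" "c 12 = 0" "c 14 = 0" "c 15 = 0" using g1 g2 z14 z15 z10 by linarith+
            then show thesis by (rule that(6))
          next
            case False
            then have "c 11 = 1" "c 12 = 1" "c 10 = 0" "c 13 = 0" "c 14 = 0" "c 15 = 0" using g1 g2 z14 z15 z10 by linarith+
            then show thesis by (rule that(5))
          qed
        next
          case n10: False
          show thesis
          proof (cases "c 12 = 0")
            case True
            then have "c 10 = 1" "c 13 = 1" "c 11 = 0" "c 12 = 0" "c 14 = 0" "c 15 = 0" using g1 g2 z14 z15 n10 by linarith+
            then show thesis by (rule that(4))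
          next
            case False
            then have "c 10 = 1" "c 12 = 1" "c 11 = 0" "c 13 = 0" "c 14 = 0" "c 15 = 0" using g1 g2 z14 z15 n10 by linarith+
            then show thesis by (rule that(3))
          qed
        qed
      qed
    qed
  qed
  then show ?thesis
  proof cases
    case a
    have "c 2 = c 1" "c 3 = c 1" "c 4 = c 1" using hE0 hE1 hE2 hE3 a by linarith+
    moreover have "c 1 \<le> k + 1" using hE0 a by linarith
    moreover have "2 * c 1 + c 9 = 2*k+3" using hE0 a by linarith
    ultimately show ?thesis using S a by (intro fin4[of _ _ "c 1"]) linarith+
  next
    case b
    have "c 2 = c 1 + 1" "c 3 = c 1 + 1" "c 4 = c 1" using hE0 hE1 hE2 hE3 b by linarith+
    moreover have "c 1 \<le> k + 1" using hE0 b by linarith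
    moreover have "2 * c 1 + c 9 + 1 = 2*k+3" using hE0 b by linarith
    ultimately show ?thesis using S b by (intro fin5[of _ _ "c 1"]) linarith+
  next
    case c
    have "c 2 = c 1" "c 3 = c 1" "c 4 + 1 = c 1" using hE0 hE1 hE2 hE3 c by linarith+
    moreover have "c 1 \<le> k + 1" using hE0 c by linarith
    moreover have "2 * c 1 + c 9 = 2*k+3" using hE0 c by linarith
    ultimately show ?thesis using S c by (intro fin4[of _ _ "c 1"]) linarith+
  next
    case d
    have "c 2 = c 1" "c 3 = c 1 + 1" "c 4 = c 1" using hE0 hE1 hE2 hE3 d by linarith+
    moreover have "c 1 \<le> k + 1" using hE0 d by linarith
    moreover have "2 * c 1 + c 9 + 1 = 2*k+3" using hE0 d by linarith
    ultimately show ?thesis using S d by (intro fin5[of _ _ "c 1"]) linarith+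
  next
    case e
    have "c 2 = c 1 + 1" "c 3 = c 1" "c 4 = c 1" using hE0 hE1 hE2 hE3 e by linarith+
    moreover have "c 1 \<le> k + 1" using hE0 e by linarith
    moreover have "2 * c 1 + c 9 + 1 = 2*k+3" using hE0 e by linarith
    ultimately show ?thesis using S e by (intro fin5[of _ _ "c 1"]) linarith+
  next
    case f
    have "c 2 = c 1 + 1" "c 3 = c 1 + 1" "c 4 = c 1 + 1" using hE0 hE1 hE2 hE3 f by linarith+
    moreover have "c 1 \<le> k" using hE0 f by linarith
    moreover have "2 * c 1 + c 9 + 2 = 2*k+3" using hE0 f by linarith
    ultimately show ?thesis using S f by (intro fin6[of _ _ "c 1"]) linarith+
  qed
qed

lemma part2: "{y + 2*k + a + 4*i | a i. a \<in> {4,5,6,8,9} \<and> i \<le> k} = lengths (B2 y k)"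
proof (rule set_eqI, rule iffI)
  fix n assume "n \<in> {y + 2*k + a + 4*i | a i. a \<in> {4,5,6,8,9} \<and> i \<le> k}"
  then obtain a i where ai: "a \<in> {4,5,6,8,9}" "i \<le> k" "n = y + 2*k + a + 4*i" by blast
  have "\<exists>c. n = csum Ts2 c \<and> B2 y k = comb Ts2 c"
  proof -
    have "\<exists>v::nat list. length v = 16 \<and> n = sum_list v \<and> eqs2 y k (\<lambda>j. v!j)"
    proof -
      from ai(1) consider "a = 4" | "a = 5" | "a = 6" | "a = 8" | "a = 9" by blast
      then show ?thesis
      proof cases
        case 1 show ?thesis
          by (rule exI[of _ "[y,i,i,i,i,i,i,0,0,2*k+3-2*i,0,0,0,0,1,0]"]) (use ai 1 in \<open>simp add: eqs2_def\<close>)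
      next
        case 2 show ?thesis
          by (rule exI[of _ "[y,i,i+1,i+1,i,i,i,0,0,2*k+2-2*i,0,0,0,0,0,1]"]) (use ai 2 in \<open>simp add: eqs2_def\<close>)
      next
        case 3 show ?thesis
          by (rule exI[of _ "[y,i,i+1,i+1,i+1,i,i,0,0,2*k+1-2*i,0,1,0,1,0,0]"]) (use ai 3 in \<open>simp add: eqs2_def\<close>)
      next
        case 4 show ?thesis
          by (rule exI[of _ "[y,i+1,i+1,i+1,i+1,i+1,i+1,0,0,2*k+1-2*i,0,0,0,0,1,0]"]) (use ai 4 in \<open>simp add: eqs2_def\<close>)
      next
        case 5 show ?thesis
          by (rule exI[of _ "[y,i+1,i+2,i+2,i+1,i+1,i+1,0,0,2*k-2*i,0,0,0,0,0,1]"]) (use ai 5 in \<open>simp add: eqs2_def\<close>)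
      qed
    qed
    then obtain v where v: "length v = 16" "n = sum_list v" "eqs2 y k (\<lambda>j. v!j)" by blast
    have "B2 y k = comb Ts2 (\<lambda>j. v!j)" unfolding B2_eq using v(3) .
    moreover have "n = csum Ts2 (\<lambda>j. v!j)"
    proof -
      obtain v0 v1 v2 v3 v4 v5 v6 v7 v8 v9 v10 v11 v12 v13 v14 v15 where
        "v = [v0,v1,v2,v3,v4,v5,v6,v7,v8,v9,v10,v11,v12,v13,v14,v15]"
        using v(1) by (simp add: length_Suc_conv eval_nat_numeral) blast
      then show ?thesis using v(2) by (simp add: csum16 del: csum_Cons)
    qed
    ultimately show ?thesis by blast
  qed
  then show "n \<in> lengths (B2 y k)" unfolding B2_len by blast
next
  fix n assume "n \<in> lengths (B2 y k)"
  then obtain c where c: "n = csum Ts2 c" "B2 y k = comb Ts2 c" unfolding B2_len by blast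
  from arith2[OF c(2)[unfolded B2_eq]] obtain a i where
    "(a = 4 \<or> a = 5 \<or> a = 6 \<or> a = 8 \<or> a = (9::nat))" "i \<le> k"
    "SUM2 c = y + 2*k + a + 4*i" by blast
  then show "n \<in> {y + 2*k + a + 4*i | a i. a \<in> {4,5,6,8,9} \<and> i \<le> k}"
    using c(1) unfolding csum16 by auto
qed



lemma sum_replicate0: "sum_mset (replicate_mset n (0::bit^5)) = 0"
  by (induction n) auto

theorem lemma3p8:
  fixes y k :: nat
  shows "{y + 2*k + a + 4*i | a i. a \<in> {3,4,6,7} \<and> i \<le> k}
           \<in> system_of_sets (UNIV :: (bit ^ 5) set)
       \<and> {y + 2*k + a + 4*i | a i. a \<in> {4,5,6,8,9} \<and> i \<le> k}
           \<in> system_of_sets (UNIV :: (bit ^ 5) set)"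
proof
  have z1: "B1 y k \<in> zss UNIV"
    unfolding zss_def seqs_over_def zero_sum_def B1_def
    using sum_replicate0 sum_mset_repeat[OF zs1_0] by (simp add: vec_double)
  show "{y + 2*k + a + 4*i | a i. a \<in> {3,4,6,7} \<and> i \<le> k} \<in> system_of_sets (UNIV :: (bit ^ 5) set)"
    unfolding part1 system_of_sets_def using z1 by blast
next
  have z2: "B2 y k \<in> zss UNIV"
  proof -
    have "sum_mset (B2 y k) = sum_mset (replicate_mset y (0::bit^5)) +
        sum_mset (repeat_mset (2*k+3) {#E0,E1,E2,E3,E4,E5#}) + sum_mset {#E1,E2,G1,G2#}"
      unfolding B2_def by (simp only: sum_mset.union)
    also have "\<dots> = 0" unfolding sum_replicate0 sum_mset_repeat[OF zs2_0] zs2_5 by simp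
    finally show ?thesis unfolding zss_def seqs_over_def zero_sum_def by simp
  qed
  show "{y + 2*k + a + 4*i | a i. a \<in> {4,5,6,8,9} \<and> i \<le> k} \<in> system_of_sets (UNIV :: (bit ^ 5) set)"
    unfolding part2 system_of_sets_def using z2 by blast
qed

end
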